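(* Let $(X,d)$ be a $K$-doubling metric space ($K\ge2$). Let $\mathcal F_1\subset\mathrm{Lip}(X,\mathbb{R})$ and $\mathcal F\subset\mathrm{Lip}(X,\mathbb{R}^D)$ be function spaces such that: (1) $(\mathcal F_1,\|\cdot\|_{\mathcal F_1})$ and $(\mathcal F,\|\cdot\|_{\mathcal F})$ are normed linear spaces; (2) $\|f\|_{\mathrm{Lip}}\lesssim\|f\|_{\mathcal F_1}$ for all $f\in\mathcal F_1$ and $\|v\|_{\mathrm{Lip}}\lesssim\|v\|_{\mathcal F}$ for all $v\in\mathcal F$; (3) for $f\in\mathcal F_1$ and $v,w\in\mathcal F$: $fv\in\mathcal F$ with $\|fv\|_{\mathcal F}\lesssim\|f\|_{\mathcal F_1}\|v\|_{\mathcal F}$, and $v\cdot w\in\mathcal F_1$ with $\|v\cdot w\|_{\mathcal F_1}\lesssim\|v\|_{\mathcal F}\|w\|_{\mathcal F}$; if $f\in\mathcal F_1$ and $f\ge c>0$ on $X$ then $1/f\in\mathcal F_1$ with $\|1/f\|_{\mathcal F_1}\lesssim_c\|f\|_{\mathcal F_1}$; if $v\in\mathcal F$ and $|v|\ge c>0$ on $X$ then $|v|\in\mathcal F_1$ with $\||v|\|_{\mathcal F_1}\lesssim_c\|v\|_{\mathcal F}$; (4) for every $\delta>0$ and $w\in\mathrm{Lip}(X,\mathbb{R}^D)$ with $\|w\|_{\mathrm{Lip}}\le1$ there exists $v\in\mathcal F$ with $\|v-w\|_{L^\infty}<\delta$ and $\|v\|_{\mathcal F}\lesssim_\delta\|w\|_{L^\infty}+\|w\|_{\mathrm{Lip}}$.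 Let $1\le m\le D-224K^4\log K$. If $v_1,\dots,v_m:X\to\mathbb{S}^{D-1}$ satisfy $\|v_i\|_{\mathcal F}\le1$ and $v_1(p),\dots,v_m(p)$ are orthonormal for every $p\in X$, then there exists $v_{m+1}:X\to\mathbb{S}^{D-1}$ with $\|v_{m+1}\|_{\mathcal F}\lesssim_{K,m,\mathcal F}1$ such that $v_1(p),\dots,v_{m+1}(p)$ are orthonormal for every $p\in X$.
   Context: $(X,d)$ is $K$-doubling if every ball of radius $R$ is covered by $K$ balls of radius $R/2$. $\mathrm{Lip}(X,\mathbb{R}^D)$ is the space of Lipschitz maps $X\to\mathbb{R}^D$, with $\|f\|_{\mathrm{Lip}}=\sup_{x\ne y}|f(x)-f(y)|/d(x,y)$ and $\|f\|_{L^\infty}=\sup_X|f|$. Implied constants in the hypotheses are fixed constants; the conclusion's constant depends on $K$, $m$, and those constants of $\mathcal F,\mathcal F_1$. *)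

theory Defs
  imports "HOL-Analysis.Analysis"
begin

text \<open>Euclidean space R^D, represented as real sequences vanishing from index D on
  (so that the dimension D can be quantified inside a formula).\<close>

definition RD :: "nat \<Rightarrow> (nat \<Rightarrow> real) set" where
  "RD D = {x. \<forall>i\<ge>D. x i = 0}"

definition vinner :: "nat \<Rightarrow> (nat \<Rightarrow> real) \<Rightarrow> (nat \<Rightarrow> real) \<Rightarrow> real" where
  "vinner D x y = (\<Sum>i<D. x i * y i)"

definition vnorm :: "nat \<Rightarrow> (nat \<Rightarrow> real) \<Rightarrow> real" where
  "vnorm D x = sqrt (vinner D x x)"

definition doubling :: "'a::metric_space set \<Rightarrow> nat \<Rightarrow> bool" where
  "doubling X K \<longleftrightarrow>
     (\<forall>x\<in>X. \<forall>R>0. \<exists>S. S \<subseteq> X \<and> finite S \<and> card S \<le> K \<and>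
        X \<inter> ball x R \<subseteq> (\<Union>s\<in>S. ball s (R/2)))"

definition lipqR :: "'a::metric_space set \<Rightarrow> ('a \<Rightarrow> real) \<Rightarrow> real set" where
  "lipqR X f = {\<bar>f x - f y\<bar> / dist x y | x y. x \<in> X \<and> y \<in> X \<and> x \<noteq> y}"

definition lipschitzR :: "'a::metric_space set \<Rightarrow> ('a \<Rightarrow> real) \<Rightarrow> bool" where
  "lipschitzR X f \<longleftrightarrow> bdd_above (lipqR X f)"

definition lipnormR :: "'a::metric_space set \<Rightarrow> ('a \<Rightarrow> real) \<Rightarrow> real" where
  "lipnormR X f = Sup (insert 0 (lipqR X f))"

definition lipqV :: "nat \<Rightarrow> 'a::metric_space set \<Rightarrow> ('a \<Rightarrow> nat \<Rightarrow> real) \<Rightarrow> real set" where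
  "lipqV D X f = {vnorm D (\<lambda>i. f x i - f y i) / dist x y | x y. x \<in> X \<and> y \<in> X \<and> x \<noteq> y}"

definition lipschitzV :: "nat \<Rightarrow> 'a::metric_space set \<Rightarrow> ('a \<Rightarrow> nat \<Rightarrow> real) \<Rightarrow> bool" where
  "lipschitzV D X f \<longleftrightarrow> bdd_above (lipqV D X f)"

definition lipnormV :: "nat \<Rightarrow> 'a::metric_space set \<Rightarrow> ('a \<Rightarrow> nat \<Rightarrow> real) \<Rightarrow> real" where
  "lipnormV D X f = Sup (insert 0 (lipqV D X f))"

definition boundedV :: "nat \<Rightarrow> 'a set \<Rightarrow> ('a \<Rightarrow> nat \<Rightarrow> real) \<Rightarrow> bool" where
  "boundedV D X f \<longleftrightarrow> bdd_above ((\<lambda>x. vnorm D (f x)) ` X)"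

definition linfV :: "nat \<Rightarrow> 'a set \<Rightarrow> ('a \<Rightarrow> nat \<Rightarrow> real) \<Rightarrow> real" where
  "linfV D X f = Sup (insert 0 ((\<lambda>x. vnorm D (f x)) ` X))"

text \<open>Lip(X,R) and Lip(X,R^D): Lipschitz maps on X (extended by 0 outside X, so that
  maps on X correspond to unique HOL functions).\<close>

definition LipR :: "'a::metric_space set \<Rightarrow> ('a \<Rightarrow> real) set" where
  "LipR X = {f. lipschitzR X f \<and> (\<forall>x. x \<notin> X \<longrightarrow> f x = 0)}"

definition LipV :: "nat \<Rightarrow> 'a::metric_space set \<Rightarrow> ('a \<Rightarrow> nat \<Rightarrow> real) set" where
  "LipV D X = {f. lipschitzV D X f \<and> (\<forall>x\<in>X. f x \<in> RD D) \<and>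
                  (\<forall>x. x \<notin> X \<longrightarrow> f x = (\<lambda>i. 0))}"

definition normed_lin_space ::
  "'f \<Rightarrow> ('f \<Rightarrow> 'f \<Rightarrow> 'f) \<Rightarrow> (real \<Rightarrow> 'f \<Rightarrow> 'f) \<Rightarrow> 'f set \<Rightarrow> ('f \<Rightarrow> real) \<Rightarrow> bool" where
  "normed_lin_space z add sc F N \<longleftrightarrow>
     z \<in> F \<and> (\<forall>f\<in>F. \<forall>g\<in>F. add f g \<in> F) \<and> (\<forall>a. \<forall>f\<in>F. sc a f \<in> F) \<and>
     (\<forall>f\<in>F. 0 \<le> N f) \<and> (\<forall>f\<in>F. N f = 0 \<longleftrightarrow> f = z) \<and>
     (\<forall>a. \<forall>f\<in>F. N (sc a f) = \<bar>a\<bar> * N f) \<and>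
     (\<forall>f\<in>F. \<forall>g\<in>F. N (add f g) \<le> N f + N g)"

definition normed_fs_R :: "('a \<Rightarrow> real) set \<Rightarrow> (('a \<Rightarrow> real) \<Rightarrow> real) \<Rightarrow> bool" where
  "normed_fs_R F N \<longleftrightarrow>
     normed_lin_space (\<lambda>x. 0) (\<lambda>f g x. f x + g x) (\<lambda>a f x. a * f x) F N"

definition normed_fs_V :: "('a \<Rightarrow> nat \<Rightarrow> real) set \<Rightarrow> (('a \<Rightarrow> nat \<Rightarrow> real) \<Rightarrow> real) \<Rightarrow> bool" where
  "normed_fs_V F N \<longleftrightarrow>
     normed_lin_space (\<lambda>x i. 0) (\<lambda>f g x i. f x i + g x i) (\<lambda>a f x i. a * f x i) F N"

end

theory Submission
  imports Defs
begin

lemma vnorm_L2: "vnorm D x = L2_set x {..<D}"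
  by (simp add: vnorm_def vinner_def L2_set_def power2_eq_square)

lemma vnorm_nonneg[simp]: "0 \<le> vnorm D x"
  by (simp add: vnorm_L2)

lemma vinner_sym: "vinner D x y = vinner D y x"
  by (simp add: vinner_def mult.commute)

lemma vnorm_add: "vnorm D (\<lambda>i. x i + y i) \<le> vnorm D x + vnorm D y"
  by (simp add: vnorm_L2 L2_set_triangle_ineq)

lemma vnorm_scale: "vnorm D (\<lambda>i. c * x i) = \<bar>c\<bar> * vnorm D x"
proof -
  have "(\<Sum>i<D. c * x i * (c * x i)) = c^2 * (\<Sum>i<D. x i * x i)"
    by (simp add: sum_distrib_left power2_eq_square algebra_simps)
  then show ?thesis unfolding vnorm_def vinner_def by (simp add: real_sqrt_mult)
qed

lemma vinner_CS: "\<bar>vinner D x y\<bar> \<le> vnorm D x * vnorm D y"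
proof -
  have "\<bar>vinner D x y\<bar> \<le> (\<Sum>i<D. \<bar>x i\<bar> * \<bar>y i\<bar>)"
    unfolding vinner_def by (metis (no_types, lifting) abs_mult sum.cong sum_abs)
  also have "\<dots> \<le> vnorm D x * vnorm D y" unfolding vnorm_L2 by (rule L2_set_mult_ineq)
  finally show ?thesis .
qed

lemma vnorm_sq: "(vnorm D x)^2 = vinner D x x"
  unfolding vnorm_def vinner_def by (simp add: sum_nonneg)

lemma vnorm_diff_ge: "vnorm D x - vnorm D y \<le> vnorm D (\<lambda>i. x i - y i)"
proof -
  have "vnorm D x = vnorm D (\<lambda>i. (x i - y i) + y i)" by simp
  also have "\<dots> \<le> vnorm D (\<lambda>i. x i - y i) + vnorm D y" by (rule vnorm_add)
  finally show ?thesis by simp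
qed

lemma vnorm_sum: "finite S \<Longrightarrow> vnorm D (\<lambda>i. \<Sum>j\<in>S. c j * a j i) \<le> (\<Sum>j\<in>S. \<bar>c j\<bar> * vnorm D (a j))"
proof (induction S rule: finite_induct)
  case empty
  then show ?case by (simp add: vnorm_def vinner_def)
next
  case (insert j S)
  have "vnorm D (\<lambda>i. \<Sum>j\<in>insert j S. c j * a j i) = vnorm D (\<lambda>i. c j * a j i + (\<Sum>j\<in>S. c j * a j i))"
    using insert by simp
  also have "\<dots> \<le> vnorm D (\<lambda>i. c j * a j i) + vnorm D (\<lambda>i. \<Sum>j\<in>S. c j * a j i)" by (rule vnorm_add)
  also have "\<dots> \<le> \<bar>c j\<bar> * vnorm D (a j) + (\<Sum>j\<in>S. \<bar>c j\<bar> * vnorm D (a j))"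
    using insert by (simp add: vnorm_scale)
  finally show ?case using insert by simp
qed

lemma vinner_sum_right: "vinner D x (\<lambda>i. \<Sum>j\<in>S. c j * a j i) = (\<Sum>j\<in>S. c j * vinner D x (a j))"
proof -
  have "vinner D x (\<lambda>i. \<Sum>j\<in>S. c j * a j i) = (\<Sum>i<D. \<Sum>j\<in>S. x i * (c j * a j i))"
    unfolding vinner_def by (simp add: sum_distrib_left)
  also have "\<dots> = (\<Sum>j\<in>S. \<Sum>i<D. x i * (c j * a j i))" by (rule sum.swap)
  also have "\<dots> = (\<Sum>j\<in>S. c j * vinner D x (a j))"
    unfolding vinner_def by (simp add: sum_distrib_left mult.left_commute)
  finally show ?thesis .
qed

lemma vinner_diff_right: "vinner D x (\<lambda>i. y i - z i) = vinner D x y - vinner D x z"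
  unfolding vinner_def by (simp add: algebra_simps sum_subtractf)

lemma vinner_scale_right: "vinner D x (\<lambda>i. c * y i) = c * vinner D x y"
  unfolding vinner_def by (simp add: algebra_simps sum_distrib_left)

lemma exists_orth_aux0:
  "\<forall>(bs::(nat\<Rightarrow>real) list) (I::nat set). length bs = n \<longrightarrow> finite I \<longrightarrow> n < card I \<longrightarrow>
   (\<exists>x. (\<forall>i. i \<notin> I \<longrightarrow> x i = 0) \<and> (\<exists>i\<in>I. x i \<noteq> 0) \<and> (\<forall>b\<in>set bs. (\<Sum>i\<in>I. b i * x i) = (0::real)))"
proof (induction n)
  case 0
  show ?case
  proof (intro allI impI)
    fix bs :: "(nat \<Rightarrow> real) list" and I :: "nat set"
    assume "length bs = 0" "finite I" "0 < card I"
    then obtain i0 where "i0 \<in> I" by fastforce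
    show "\<exists>x. (\<forall>i. i \<notin> I \<longrightarrow> x i = 0) \<and> (\<exists>i\<in>I. x i \<noteq> 0) \<and> (\<forall>b\<in>set bs. (\<Sum>i\<in>I. b i * x i) = 0)"
      by (rule exI[of _ "\<lambda>i. if i = i0 then 1 else 0"]) (use \<open>i0 \<in> I\<close> \<open>length bs = 0\<close> in auto)
  qed
next
  case (Suc n)
  show ?case
  proof (intro allI impI)
    fix bb :: "(nat \<Rightarrow> real) list" and I :: "nat set"
    assume len0: "length bb = Suc n" and fI: "finite I" and cI: "Suc n < card I"
    obtain b bs where bb: "bb = b # bs" using len0 by (cases bb) auto
    have lbs: "length bs = n" using len0 bb by simp
    show "\<exists>x. (\<forall>i. i \<notin> I \<longrightarrow> x i = 0) \<and> (\<exists>i\<in>I. x i \<noteq> 0) \<and> (\<forall>b\<in>set bb. (\<Sum>i\<in>I. b i * x i) = 0)"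
    proof (cases "\<forall>i\<in>I. b i = 0")
      case True
      have "n < card I" using cI by simp
      from Suc.IH[rule_format, OF lbs fI this] obtain x where x: "\<forall>i. i \<notin> I \<longrightarrow> x i = 0" "\<exists>i\<in>I. x i \<noteq> 0"
        "\<forall>b\<in>set bs. (\<Sum>i\<in>I. b i * x i) = 0" by blast
      then show ?thesis using True bb by (intro exI[of _ x]) auto
    next
      case False
      then obtain i0 where i0: "i0 \<in> I" "b i0 \<noteq> 0" by auto
      define I' where "I' = I - {i0}"
      have fI': "finite I'" using fI by (simp add: I'_def)
      have cI': "card I' = card I - 1" using i0 fI by (simp add: I'_def)
      define bs' where "bs' = map (\<lambda>c. \<lambda>i. c i - c i0 / b i0 * b i) bs"
      have l1: "length bs' = n" using lbs by (simp add: bs'_def)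
      have l2: "n < card I'" using cI cI' by simp
      from Suc.IH[rule_format, OF l1 fI' l2] obtain x' where x': "\<forall>i. i \<notin> I' \<longrightarrow> x' i = 0" "\<exists>i\<in>I'. x' i \<noteq> 0"
        "\<forall>c\<in>set bs'. (\<Sum>i\<in>I'. c i * x' i) = 0"
        by blast
      have x'3: "(\<Sum>i\<in>I'. (c i - c i0 / b i0 * b i) * x' i) = 0" if "c \<in> set bs" for c
        using x'(3) that unfolding bs'_def by auto
      define S where "S = (\<Sum>i\<in>I'. b i * x' i)"
      define t where "t = - S / b i0"
      define x where "x = x'(i0 := t)"
      have split: "(\<Sum>i\<in>I. c i * x i) = c i0 * t + (\<Sum>i\<in>I'. c i * x' i)" for c
      proof -
        have "I = insert i0 I'" using i0 by (auto simp: I'_def)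
        then have "(\<Sum>i\<in>I. c i * x i) = c i0 * x i0 + (\<Sum>i\<in>I'. c i * x i)"
          using fI i0 by (simp add: I'_def sum.remove)
        also have "(\<Sum>i\<in>I'. c i * x i) = (\<Sum>i\<in>I'. c i * x' i)"
          by (rule sum.cong) (auto simp: x_def I'_def)
        finally show ?thesis by (simp add: x_def)
      qed
      show ?thesis
      proof (intro exI[of _ x] conjI)
        show "\<forall>i. i \<notin> I \<longrightarrow> x i = 0" using x'(1) i0 by (auto simp: x_def I'_def)
        show "\<exists>i\<in>I. x i \<noteq> 0" using x'(2) by (auto simp: x_def I'_def)
        show "\<forall>c\<in>set bb. (\<Sum>i\<in>I. c i * x i) = 0"
        proof
          fix c assume c: "c \<in> set bb"
          show "(\<Sum>i\<in>I. c i * x i) = 0"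
          proof (cases "c = b")
            case True
            have "b i0 * t = - S" using i0 by (simp add: t_def)
            then show ?thesis using True split[of b] by (simp add: S_def)
          next
            case False
            then have "c \<in> set bs" using c bb by auto
            then have "(\<Sum>i\<in>I'. (c i - c i0 / b i0 * b i) * x' i) = 0" by (rule x'3)
            moreover have "(\<Sum>i\<in>I'. (c i - c i0 / b i0 * b i) * x' i) = (\<Sum>i\<in>I'. c i * x' i) - c i0 / b i0 * S"
              unfolding S_def sum_distrib_left left_diff_distrib sum_subtractf by (simp add: mult.assoc)
            moreover have "c i0 * t = - (c i0 / b i0 * S)" by (simp add: t_def)
            ultimately show ?thesis using split[of c] by linarith
          qed
        qed
      qed
    qed
  qed
qed

lemma exists_orth_aux:
  fixes bs :: "(nat\<Rightarrow>real) list"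
  shows "finite I \<Longrightarrow> length bs < card I \<Longrightarrow>
   \<exists>x. (\<forall>i. i \<notin> I \<longrightarrow> x i = 0) \<and> (\<exists>i\<in>I. x i \<noteq> 0) \<and> (\<forall>b\<in>set bs. (\<Sum>i\<in>I. b i * x i) = (0::real))"
  using exists_orth_aux0[rule_format, OF refl] by simp

lemma exists_orth_unit:
  assumes "finite A" "card A < D"
  shows "\<exists>a\<in>RD D. vnorm D a = 1 \<and> (\<forall>b\<in>A. vinner D b a = 0)"
proof -
  obtain bs where bs: "set bs = A" "distinct bs" using finite_distinct_list[OF assms(1)] by auto
  have "length bs < card {..<D}" using bs assms by (simp add: distinct_card[symmetric])
  from exists_orth_aux[OF _ this] obtain x where x: "\<forall>i. i \<notin> {..<D} \<longrightarrow> x i = 0"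
    "\<exists>i\<in>{..<D}. x i \<noteq> 0" "\<forall>b\<in>A. (\<Sum>i<D. b i * x i) = 0" using bs by auto
  have pos: "vnorm D x > 0"
  proof -
    have "vnorm D x = L2_set x {..<D}" by (rule vnorm_L2)
    moreover have "L2_set x {..<D} \<noteq> 0" using x(2) by (subst L2_set_eq_0_iff) auto
    ultimately show ?thesis using vnorm_nonneg[of D x] by linarith
  qed
  define a where "a = (\<lambda>i. (1 / vnorm D x) * x i)"
  have "a \<in> RD D" using x(1) by (auto simp: a_def RD_def)
  moreover have "vnorm D a = 1" using pos unfolding a_def vnorm_scale by simp
  moreover have "\<forall>b\<in>A. vinner D b a = 0" using x(3)
    by (simp add: a_def vinner_scale_right, simp add: vinner_def flip: sum_divide_distrib)
  ultimately show ?thesis by blast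
qed

lemma doubling_iter:
  assumes dbl: "doubling X K" and x: "x \<in> X" and R: "R > 0"
  shows "\<exists>S. S \<subseteq> X \<and> finite S \<and> card S \<le> K^n \<and> X \<inter> ball x R \<subseteq> (\<Union>s\<in>S. ball s (R/2^n))"
proof (induction n)
  case 0
  show ?case by (rule exI[of _ "{x}"]) (use x in auto)
next
  case (Suc n)
  then obtain S where S: "S \<subseteq> X" "finite S" "card S \<le> K^n" "X \<inter> ball x R \<subseteq> (\<Union>s\<in>S. ball s (R/2^n))"
    by blast
  have "\<forall>s\<in>S. \<exists>T. T \<subseteq> X \<and> finite T \<and> card T \<le> K \<and> X \<inter> ball s (R/2^n) \<subseteq> (\<Union>t\<in>T. ball t ((R/2^n)/2))"
  proof
    fix s assume "s \<in> S"
    then have "s \<in> X" using S(1) by blast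
    moreover have "R/2^n > 0" using R by simp
    ultimately show "\<exists>T. T \<subseteq> X \<and> finite T \<and> card T \<le> K \<and> X \<inter> ball s (R/2^n) \<subseteq> (\<Union>t\<in>T. ball t ((R/2^n)/2))"
      using dbl unfolding doubling_def by blast
  qed
  then obtain T where T: "\<And>s. s \<in> S \<Longrightarrow> T s \<subseteq> X \<and> finite (T s) \<and> card (T s) \<le> K \<and>
      X \<inter> ball s (R/2^n) \<subseteq> (\<Union>t\<in>T s. ball t ((R/2^n)/2))"
    by metis
  define S' where "S' = (\<Union>s\<in>S. T s)"
  have "card S' \<le> (\<Sum>s\<in>S. card (T s))" unfolding S'_def using S(2) by (rule card_UN_le)
  also have "\<dots> \<le> (\<Sum>s\<in>S. K)" by (rule sum_mono) (use T in auto)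
  also have "\<dots> = card S * K" by simp
  also have "\<dots> \<le> K^n * K" using S(3) by simp
  finally have c: "card S' \<le> K^Suc n" by (simp add: mult.commute)
  have "X \<inter> ball x R \<subseteq> (\<Union>s\<in>S'. ball s (R/2^Suc n))"
  proof
    fix y assume y: "y \<in> X \<inter> ball x R"
    then obtain s where s: "s \<in> S" "y \<in> ball s (R/2^n)" using S(4) by blast
    then obtain t where t: "t \<in> T s" "y \<in> ball t ((R/2^n)/2)" using T[OF s(1)] y by blast
    then have "t \<in> S'" "y \<in> ball t (R/2^Suc n)" using s(1) unfolding S'_def by (auto simp: mult.commute)
    then show "y \<in> (\<Union>s\<in>S'. ball s (R/2^Suc n))" by blast
  qed
  moreover have "S' \<subseteq> X" "finite S'" using T S(2) by (auto simp: S'_def)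
  ultimately show ?case using c by blast
qed

lemma sep_count:
  assumes dbl: "doubling X K" and x: "x \<in> X" and R: "R > 0" and AX: "A \<subseteq> X"
    and sep: "\<And>a b. a \<in> A \<Longrightarrow> b \<in> A \<Longrightarrow> a \<noteq> b \<Longrightarrow> r \<le> dist a b"
    and small: "R/2^n \<le> r/2"
  shows "finite (A \<inter> ball x R) \<and> card (A \<inter> ball x R) \<le> K^n"
proof -
  obtain S where S: "S \<subseteq> X" "finite S" "card S \<le> K^n" "X \<inter> ball x R \<subseteq> (\<Union>s\<in>S. ball s (R/2^n))"
    using doubling_iter[OF dbl x R] by blast
  define B where "B = A \<inter> ball x R"
  define g where "g a = (SOME s. s \<in> S \<and> a \<in> ball s (R/2^n))" for a
  have g: "g a \<in> S \<and> a \<in> ball (g a) (R/2^n)" if "a \<in> B" for a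
  proof -
    have "a \<in> X \<inter> ball x R" using that AX by (auto simp: B_def)
    then have "a \<in> (\<Union>s\<in>S. ball s (R/2^n))" using S(4) by blast
    then have "\<exists>s. s \<in> S \<and> a \<in> ball s (R/2^n)" by blast
    then show ?thesis unfolding g_def by (rule someI_ex)
  qed
  have inj: "inj_on g B"
  proof (rule inj_onI)
    fix a b assume a: "a \<in> B" and b: "b \<in> B" and e: "g a = g b"
    show "a = b"
    proof (rule ccontr)
      assume "a \<noteq> b"
      then have "r \<le> dist a b" using sep a b by (auto simp: B_def)
      moreover have "dist a b \<le> dist (g a) a + dist (g a) b" by (rule dist_triangle3)
      moreover have "dist (g a) a < R/2^n" "dist (g a) b < R/2^n" using g[OF a] g[OF b] e by auto
      ultimately show False using small by linarith
    qed
  qed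
  have sub: "g ` B \<subseteq> S" using g by auto
  then have "finite (g ` B)" using S(2) finite_subset by blast
  then have "finite B" using inj finite_imageD by blast
  moreover have "card B = card (g ` B)" using inj by (simp add: card_image)
  moreover have "card (g ` B) \<le> card S" using sub S(2) by (rule card_mono[rotated])
  ultimately show ?thesis using S(3) unfolding B_def by linarith
qed

lemma zorn_pairwise:
  "\<exists>M. M \<subseteq> U \<and> (\<forall>a\<in>M. \<forall>b\<in>M. P a b) \<and>
      (\<forall>Z. Z \<subseteq> U \<longrightarrow> (\<forall>a\<in>Z. \<forall>b\<in>Z. P a b) \<longrightarrow> M \<subseteq> Z \<longrightarrow> Z = M)"
proof -
  define A where "A = {Z. Z \<subseteq> U \<and> (\<forall>a\<in>Z. \<forall>b\<in>Z. P a b)}"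
  have "\<forall>C\<in>chains A. \<Union>C \<in> A"
  proof
    fix C assume C: "C \<in> chains A"
    have "\<forall>a\<in>\<Union>C. \<forall>b\<in>\<Union>C. P a b"
    proof (intro ballI)
      fix a b assume "a \<in> \<Union>C" "b \<in> \<Union>C"
      then obtain Z1 Z2 where Z: "Z1 \<in> C" "Z2 \<in> C" "a \<in> Z1" "b \<in> Z2" by blast
      then have "Z1 \<subseteq> Z2 \<or> Z2 \<subseteq> Z1" using C by (auto simp: chains_def chain_subset_def)
      moreover have "Z1 \<in> A" "Z2 \<in> A" using Z C by (auto simp: chains_def)
      ultimately show "P a b" using Z unfolding A_def by blast
    qed
    moreover have "\<Union>C \<subseteq> U" using C by (auto simp: chains_def A_def)
    ultimately show "\<Union>C \<in> A" by (simp add: A_def)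
  qed
  from Zorn_Lemma[OF this] obtain M where M: "M \<in> A" "\<forall>Z\<in>A. M \<subseteq> Z \<longrightarrow> Z = M" by blast
  have h1: "M \<subseteq> U" and h2: "\<forall>a\<in>M. \<forall>b\<in>M. P a b" using M(1) by (simp_all add: A_def)
  have h3: "\<forall>Z. Z \<subseteq> U \<longrightarrow> (\<forall>a\<in>Z. \<forall>b\<in>Z. P a b) \<longrightarrow> M \<subseteq> Z \<longrightarrow> Z = M"
  proof (intro allI impI)
    fix Z assume "Z \<subseteq> U" "\<forall>a\<in>Z. \<forall>b\<in>Z. P a b" "M \<subseteq> Z"
    then have "Z \<in> A" by (simp add: A_def)
    then show "Z = M" using M(2) \<open>M \<subseteq> Z\<close> by blast
  qed
  show ?thesis by (rule exI[of _ M], intro conjI, fact h1, fact h2, fact h3)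
qed

lemma net_exists:
  fixes X :: "'a::metric_space set"
  assumes "r > 0"
  shows "\<exists>Y. Y \<subseteq> X \<and> (\<forall>a\<in>Y. \<forall>b\<in>Y. a \<noteq> b \<longrightarrow> r \<le> dist a b) \<and> (\<forall>p\<in>X. \<exists>y\<in>Y. dist p y < r)"
proof -
  obtain Y where Y0: "Y \<subseteq> X \<and> (\<forall>a\<in>Y. \<forall>b\<in>Y. a \<noteq> b \<longrightarrow> r \<le> dist a b) \<and>
    (\<forall>Z. Z \<subseteq> X \<longrightarrow> (\<forall>a\<in>Z. \<forall>b\<in>Z. a \<noteq> b \<longrightarrow> r \<le> dist a b) \<longrightarrow> Y \<subseteq> Z \<longrightarrow> Z = Y)"
    using zorn_pairwise[of X "\<lambda>a b. a \<noteq> b \<longrightarrow> r \<le> dist a b"] by (elim exE) 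
  note Y = conjunct1[OF Y0] conjunct1[OF conjunct2[OF Y0]] conjunct2[OF conjunct2[OF Y0]]
  have "\<forall>p\<in>X. \<exists>y\<in>Y. dist p y < r"
  proof (rule ccontr)
    assume "\<not> ?thesis"
    then obtain p where p: "p \<in> X" "\<forall>y\<in>Y. r \<le> dist p y" by (meson not_less)
    have pY: "p \<notin> Y"
    proof
      assume "p \<in> Y" then have "r \<le> dist p p" using p(2) by blast
      then show False using assms by simp
    qed
    have "insert p Y \<subseteq> X" using p Y by auto
    moreover have "\<forall>a\<in>insert p Y. \<forall>b\<in>insert p Y. a \<noteq> b \<longrightarrow> r \<le> dist a b"
      using Y(2) p(2) by (metis dist_commute insert_iff)
    ultimately have "insert p Y = Y" using Y(3) by (meson subset_insertI)
    then show False using pY by blast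
  qed
  then show ?thesis using Y by blast
qed

lemma assign_e:
  fixes Y :: "'a::metric_space set" and v :: "nat \<Rightarrow> 'a \<Rightarrow> nat \<Rightarrow> real"
  assumes cnt: "\<And>y. y \<in> Y \<Longrightarrow> finite (Y \<inter> ball y \<rho>) \<and> card (Y \<inter> ball y \<rho>) \<le> Mc"
    and dim: "m + Mc \<le> D" and rho: "\<rho> > 0"
  shows "\<exists>e. \<forall>y\<in>Y. e y \<in> RD D \<and> vnorm D (e y) = 1 \<and> (\<forall>k\<in>{1..m}. vinner D (v k y) (e y) = 0) \<and>
             (\<forall>y'\<in>Y. y \<noteq> y' \<and> dist y y' < \<rho> \<longrightarrow> vinner D (e y) (e y') = 0)"
proof -
  define U where "U = {(y,a). y \<in> Y \<and> a \<in> RD D \<and> vnorm D a = 1 \<and> (\<forall>k\<in>{1..m}. vinner D (v k y) a = 0)}"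
  define P where "P = (\<lambda>(y::'a,a::nat\<Rightarrow>real) (y'::'a,a'::nat\<Rightarrow>real). (y = y' \<longrightarrow> a = a') \<and> (y \<noteq> y' \<and> dist y y' < \<rho> \<longrightarrow> vinner D a a' = 0))"
  obtain G where G0: "G \<subseteq> U \<and> (\<forall>a\<in>G. \<forall>b\<in>G. P a b) \<and>
      (\<forall>Z. Z \<subseteq> U \<longrightarrow> (\<forall>a\<in>Z. \<forall>b\<in>Z. P a b) \<longrightarrow> G \<subseteq> Z \<longrightarrow> Z = G)"
    using zorn_pairwise[of U P] by (elim exE)
  note G = conjunct1[OF G0] conjunct1[OF conjunct2[OF G0]] conjunct2[OF conjunct2[OF G0]]
  have func: "a = a'" if "(y,a) \<in> G" "(y,a') \<in> G" for y a a'
    using G(2) that unfolding P_def by fastforce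
  have orth: "vinner D a a' = 0" if "(y,a) \<in> G" "(y',a') \<in> G" "y \<noteq> y'" "dist y y' < \<rho>" for y a y' a'
  proof -
    have "P (y,a) (y',a')" using G(2) that(1,2) by blast
    then show ?thesis using that(3,4) unfolding P_def by simp
  qed
  have dom: "\<exists>a. (y,a) \<in> G" if y0: "y \<in> Y" for y
  proof (rule ccontr)
    assume nd: "\<not> (\<exists>a. (y,a) \<in> G)"
    define B where "B = {a. \<exists>y'. (y',a) \<in> G \<and> dist y y' < \<rho>}"
    define h where "h y' = (SOME a. (y',a) \<in> G)" for y'
    define S where "S = Y \<inter> ball y \<rho>"
    have fS: "finite S" and cS: "card S \<le> Mc" using cnt[OF y0] by (simp_all add: S_def)
    have yS: "y \<in> S" using y0 rho by (simp add: S_def)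
    have "B \<subseteq> h ` (S - {y})"
    proof
      fix a assume "a \<in> B"
      then obtain y' where y': "(y',a) \<in> G" "dist y y' < \<rho>" by (auto simp: B_def)
      have "y' \<in> Y" using y'(1) G(1) by (auto simp: U_def)
      moreover have "y' \<noteq> y" using nd y'(1) by blast
      moreover have "h y' = a"
      proof -
        have "(y', h y') \<in> G" unfolding h_def using y'(1) by (rule someI[where P="\<lambda>a. (y',a) \<in> G"])
        then show ?thesis using func y'(1) by blast
      qed
      ultimately show "a \<in> h ` (S - {y})" using y'(2) by (auto simp: S_def)
    qed
    then have fB: "finite B" and cB: "card B \<le> card (S - {y})"
      using fS finite_subset card_image_le[of "S - {y}" h] card_mono
      by (metis finite_Diff finite_imageI, meson card_image_le card_mono finite_Diff finite_imageI order_trans)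
    have cB': "card B \<le> Mc - 1" using cB yS fS cS by simp
    have "1 \<le> Mc" using yS fS cS by (metis One_nat_def Suc_leI card_gt_0_iff empty_iff le_trans)
    define A where "A = (\<lambda>k. v k y) ` {1..m} \<union> B"
    have fA: "finite A" using fB by (simp add: A_def)
    have "card A \<le> card ((\<lambda>k. v k y) ` {1..m}) + card B" unfolding A_def by (rule card_Un_le)
    also have "\<dots> \<le> m + card B" using card_image_le[of "{1..m}" "\<lambda>k. v k y"] by simp
    finally have "card A < D" using cB' \<open>1 \<le> Mc\<close> dim by linarith
    from exists_orth_unit[OF fA this] obtain a0 where a0: "a0 \<in> RD D" "vnorm D a0 = 1"
      "\<forall>b\<in>A. vinner D b a0 = 0" by blast
    define G' where "G' = insert (y,a0) G"
    have "G' \<subseteq> U" using G(1) a0 y0 by (auto simp: G'_def U_def A_def)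
    moreover have "\<forall>p\<in>G'. \<forall>q\<in>G'. P p q"
    proof (intro ballI)
      fix p q assume p: "p \<in> G'" and q: "q \<in> G'"
      have new: "P (y,a0) (y',a)" "P (y',a) (y,a0)" if "(y',a) \<in> G" for y' a
      proof -
        have ne: "y \<noteq> y'" using nd that by blast
        have "dist y y' < \<rho> \<longrightarrow> vinner D a a0 = 0" using a0(3) that by (auto simp: A_def B_def)
        then show "P (y,a0) (y',a)" "P (y',a) (y,a0)" using ne
          by (auto simp: P_def vinner_sym dist_commute)
      qed
      show "P p q"
      proof (cases "p \<in> G")
        case True
        then show ?thesis
        proof (cases "q \<in> G")
          case True
          then show ?thesis using \<open>p \<in> G\<close> G(2) by blast
        next
          case False
          then have "q = (y,a0)" using q by (simp add: G'_def)
          then show ?thesis using new(2) \<open>p \<in> G\<close> by (cases p) auto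
        qed
      next
        case False
        then have pe: "p = (y,a0)" using p by (simp add: G'_def)
        show ?thesis
        proof (cases "q \<in> G")
          case True
          then show ?thesis using new(1) pe by (cases q) auto
        next
          case False
          then have "q = (y,a0)" using q by (simp add: G'_def)
          then show ?thesis using pe by (simp add: P_def)
        qed
      qed
    qed
    moreover have "G \<subseteq> G'" by (auto simp: G'_def)
    ultimately have "G' = G" using G(3) by blast
    then show False using nd by (auto simp: G'_def)
  qed
  define e where "e y = (SOME a. (y,a) \<in> G)" for y
  have eG: "(y, e y) \<in> G" if "y \<in> Y" for y
    unfolding e_def using dom[OF that] by (rule someI_ex)
  show ?thesis
  proof (rule exI[of _ e], rule ballI)
    fix y assume y: "y \<in> Y"
    have "(y, e y) \<in> U" using eG[OF y] G(1) by blast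
    then have 1: "e y \<in> RD D \<and> vnorm D (e y) = 1 \<and> (\<forall>k\<in>{1..m}. vinner D (v k y) (e y) = 0)"
      by (auto simp: U_def)
    have 2: "\<forall>y'\<in>Y. y \<noteq> y' \<and> dist y y' < \<rho> \<longrightarrow> vinner D (e y) (e y') = 0"
      using orth eG y by blast
    show "e y \<in> RD D \<and> vnorm D (e y) = 1 \<and> (\<forall>k\<in>{1..m}. vinner D (v k y) (e y) = 0) \<and>
             (\<forall>y'\<in>Y. y \<noteq> y' \<and> dist y y' < \<rho> \<longrightarrow> vinner D (e y) (e y') = 0)"
      using 1 2 by blast
  qed
qed

lemma construct_w:
  fixes X :: "'a::metric_space set" and v :: "nat \<Rightarrow> 'a \<Rightarrow> nat \<Rightarrow> real"
  assumes dbl: "doubling X K" and K2: "2 \<le> K" and m1: "1 \<le> m" and dim: "m + K^3 \<le> D" and L0: "0 \<le> L0"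
    and vl: "\<And>k x y. k \<in> {1..m} \<Longrightarrow> x \<in> X \<Longrightarrow> y \<in> X \<Longrightarrow> vnorm D (\<lambda>i. v k x i - v k y i) \<le> L0 * dist x y"
    and r_def: "r = 1 / (16 * real m * real K^2 * (L0 + 1))"
  shows "\<exists>w. (\<forall>p\<in>X. w p \<in> RD D) \<and> (\<forall>p\<in>X. vnorm D (w p) \<le> real K^2) \<and> (\<forall>p\<in>X. 1/2 \<le> vnorm D (w p)) \<and>
    (\<forall>p\<in>X. \<forall>k\<in>{1..m}. \<bar>vinner D (w p) (v k p)\<bar> \<le> 1/(8*real m)) \<and>
    (\<forall>p\<in>X. \<forall>q\<in>X. vnorm D (\<lambda>i. w p i - w q i) \<le> (real K^2 / r) * dist p q)"
proof -
  have rpos: "r > 0" using K2 m1 L0 by (simp add: r_def)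
  have rbound: "real K^2 * (L0 * (2 * r)) \<le> 1 / (8 * real m)"
  proof -
    have Kp: "real K^2 > 0" using K2 by simp
    have mp: "real m > 0" using m1 by simp
    have "real K^2 * (L0 * (2 * r)) = (L0 / (L0 + 1)) * (1 / (8 * real m))"
      using Kp mp L0 unfolding r_def by (simp add: divide_simps)
    also have "L0 / (L0 + 1) \<le> 1" using L0 by simp
    then have "(L0 / (L0 + 1)) * (1 / (8 * real m)) \<le> 1 * (1 / (8 * real m))" using mp by (intro mult_right_mono) auto
    finally show ?thesis by simp
  qed
  obtain Y where Y: "Y \<subseteq> X" "\<forall>a\<in>Y. \<forall>b\<in>Y. a \<noteq> b \<longrightarrow> r \<le> dist a b" "\<forall>p\<in>X. \<exists>y\<in>Y. dist p y < r"
    using net_exists[OF rpos, of X] by blast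
  have sepY: "\<And>a b. a \<in> Y \<Longrightarrow> b \<in> Y \<Longrightarrow> a \<noteq> b \<Longrightarrow> r \<le> dist a b" using Y(2) by blast
  have cnt4: "finite (Y \<inter> ball y (4*r)) \<and> card (Y \<inter> ball y (4*r)) \<le> K^3" if "y \<in> Y" for y
    by (rule sep_count[OF dbl _ _ Y(1) sepY]) (use that Y(1) rpos in auto)
  have cnt2: "finite (Y \<inter> ball p (2*r)) \<and> card (Y \<inter> ball p (2*r)) \<le> K^2" if "p \<in> X" for p
    by (rule sep_count[OF dbl _ _ Y(1) sepY]) (use that rpos in auto)
  have "4 * r > 0" using rpos by simp
  from assign_e[OF cnt4 dim this, of v] obtain e where e:
    "\<And>y. y \<in> Y \<Longrightarrow> e y \<in> RD D \<and> vnorm D (e y) = 1 \<and> (\<forall>k\<in>{1..m}. vinner D (v k y) (e y) = 0) \<and>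
             (\<forall>y'\<in>Y. y \<noteq> y' \<and> dist y y' < 4*r \<longrightarrow> vinner D (e y) (e y') = 0)"
    by blast
  define Np where "Np p = Y \<inter> ball p (2*r)" for p
  define \<psi> where "\<psi> (y::'a) (p::'a) = max 0 (1 - dist p y / (2*r))" for y p
  define w where "w p = (\<lambda>i. \<Sum>y\<in>Np p. \<psi> y p * e y i)" for p
  have psi0: "0 \<le> \<psi> y p" and psi1: "\<psi> y p \<le> 1" for y p
    using rpos by (auto simp: \<psi>_def)
  have psiz: "\<psi> y p = 0" if "2*r \<le> dist p y" for y p
    using that rpos by (auto simp: \<psi>_def)
  have psih: "1/2 \<le> \<psi> y p" if "dist p y < r" for y p
    using that rpos by (auto simp: \<psi>_def field_simps)
  have psil: "\<bar>\<psi> y p - \<psi> y q\<bar> \<le> dist p q / (2*r)" for y p q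
  proof -
    have "\<bar>dist p y - dist q y\<bar> \<le> dist p q" using dist_triangle[of p y q] dist_triangle[of q y p] dist_commute[of p q] by (simp add: abs_le_iff)
    then have "\<bar>(1 - dist p y / (2*r)) - (1 - dist q y / (2*r))\<bar> \<le> dist p q / (2*r)"
      using rpos by (simp add: divide_simps abs_le_iff)
    then show ?thesis unfolding \<psi>_def by (simp add: abs_le_iff max_def split: if_splits)
  qed
  have ext: "w p = (\<lambda>i. \<Sum>y\<in>T. \<psi> y p * e y i)" if "finite T" "Np p \<subseteq> T" "T \<subseteq> Y" for p T
  proof
    fix i
    have "(\<Sum>y\<in>T. \<psi> y p * e y i) = (\<Sum>y\<in>Np p. \<psi> y p * e y i)"
    proof (rule sum.mono_neutral_right[OF that(1) that(2)])
      show "\<forall>y\<in>T - Np p. \<psi> y p * e y i = 0"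
        using that(3) psiz by (force simp: Np_def not_less)
    qed
    then show "w p i = (\<Sum>y\<in>T. \<psi> y p * e y i)" by (simp add: w_def)
  qed
  show ?thesis
  proof (intro exI[of _ w] conjI ballI)
    fix p assume p: "p \<in> X"
    have fN: "finite (Np p)" and cN: "card (Np p) \<le> K^2" using cnt2[OF p] by (simp_all add: Np_def)
    have NY: "Np p \<subseteq> Y" by (auto simp: Np_def)
    show "w p \<in> RD D"
      using e NY by (auto simp: w_def RD_def intro!: sum.neutral)
    have "vnorm D (w p) \<le> (\<Sum>y\<in>Np p. \<bar>\<psi> y p\<bar> * vnorm D (e y))"
      unfolding w_def by (rule vnorm_sum[OF fN])
    also have "\<dots> \<le> (\<Sum>y\<in>Np p. 1)"
      by (rule sum_mono) (use e NY psi0 psi1 in auto)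
    also have "\<dots> \<le> real K^2" using cN by simp
    finally show "vnorm D (w p) \<le> real K^2" .
    obtain y0 where y0: "y0 \<in> Y" "dist p y0 < r" using Y(3) p by blast
    have y0N: "y0 \<in> Np p" using y0 rpos by (simp add: Np_def)
    have "vinner D (e y0) (w p) = (\<Sum>y\<in>Np p. \<psi> y p * vinner D (e y0) (e y))"
      unfolding w_def by (rule vinner_sum_right)
    also have "\<dots> = \<psi> y0 p * vinner D (e y0) (e y0)"
    proof (rule sum.remove[OF fN y0N, THEN trans])
      have "(\<Sum>y\<in>Np p - {y0}. \<psi> y p * vinner D (e y0) (e y)) = 0"
      proof (rule sum.neutral, rule ballI)
        fix y assume y: "y \<in> Np p - {y0}"
        have "dist y0 y \<le> dist p y0 + dist p y" by (rule dist_triangle3)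
        then have "dist y0 y < 4*r" using y y0 rpos by (simp add: Np_def)
        then have "vinner D (e y0) (e y) = 0" using e[OF y0(1)] y NY by auto
        then show "\<psi> y p * vinner D (e y0) (e y) = 0" by simp
      qed
      then show "\<psi> y0 p * vinner D (e y0) (e y0) + (\<Sum>y\<in>Np p - {y0}. \<psi> y p * vinner D (e y0) (e y)) =
          \<psi> y0 p * vinner D (e y0) (e y0)" by simp
    qed
    also have "\<dots> = \<psi> y0 p" using e[OF y0(1)] vnorm_sq[of D "e y0"] by simp
    finally have "vinner D (e y0) (w p) = \<psi> y0 p" .
    moreover have "\<bar>vinner D (e y0) (w p)\<bar> \<le> vnorm D (e y0) * vnorm D (w p)" by (rule vinner_CS)
    ultimately show "1/2 \<le> vnorm D (w p)" using psih[OF y0(2)] e[OF y0(1)] by simp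
  next
    fix p k assume p: "p \<in> X" and k: "k \<in> {1..m}"
    have fN: "finite (Np p)" and cN: "card (Np p) \<le> K^2" using cnt2[OF p] by (simp_all add: Np_def)
    have NY: "Np p \<subseteq> Y" by (auto simp: Np_def)
    have "vinner D (w p) (v k p) = vinner D (v k p) (w p)" by (rule vinner_sym)
    also have "\<dots> = (\<Sum>y\<in>Np p. \<psi> y p * vinner D (v k p) (e y))"
      unfolding w_def by (rule vinner_sum_right)
    finally have eq: "vinner D (w p) (v k p) = (\<Sum>y\<in>Np p. \<psi> y p * vinner D (v k p) (e y))" .
    have b: "\<bar>\<psi> y p * vinner D (v k p) (e y)\<bar> \<le> L0 * (2*r)" if y: "y \<in> Np p" for y
    proof -
      have yY: "y \<in> Y" using y NY by blast
      have "vinner D (e y) (\<lambda>i. v k p i - v k y i) = vinner D (e y) (v k p) - vinner D (e y) (v k y)"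
        by (rule vinner_diff_right)
      also have "vinner D (e y) (v k y) = 0" using e[OF yY] k by (simp add: vinner_sym)
      finally have "vinner D (v k p) (e y) = vinner D (e y) (\<lambda>i. v k p i - v k y i)" by (simp add: vinner_sym)
      then have "\<bar>vinner D (v k p) (e y)\<bar> \<le> vnorm D (e y) * vnorm D (\<lambda>i. v k p i - v k y i)"
        using vinner_CS by metis
      also have "\<dots> \<le> L0 * dist p y" using e[OF yY] vl[OF k p] yY Y(1) by auto
      also have "\<dots> \<le> L0 * (2*r)" using y L0 by (intro mult_left_mono) (auto simp: Np_def)
      finally have vb: "\<bar>vinner D (v k p) (e y)\<bar> \<le> L0 * (2*r)" .
      have "\<bar>\<psi> y p * vinner D (v k p) (e y)\<bar> = \<psi> y p * \<bar>vinner D (v k p) (e y)\<bar>"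
        using psi0[of y p] by (simp add: abs_mult)
      also have "\<dots> \<le> 1 * \<bar>vinner D (v k p) (e y)\<bar>" by (rule mult_right_mono[OF psi1]) simp
      finally show ?thesis using vb by simp
    qed
    have "\<bar>vinner D (w p) (v k p)\<bar> \<le> (\<Sum>y\<in>Np p. \<bar>\<psi> y p * vinner D (v k p) (e y)\<bar>)"
      unfolding eq by (rule sum_abs)
    also have "\<dots> \<le> (\<Sum>y\<in>Np p. L0 * (2*r))" by (rule sum_mono) (rule b)
    also have "\<dots> = real (card (Np p)) * (L0 * (2*r))" by simp
    also have "\<dots> \<le> real K^2 * (L0 * (2*r))"
      using cN L0 rpos by (intro mult_right_mono) (simp_all add: of_nat_le_iff[symmetric])
    also have "\<dots> \<le> 1/(8*real m)" by (rule rbound)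
    finally show "\<bar>vinner D (w p) (v k p)\<bar> \<le> 1/(8*real m)" .
  next
    fix p q assume p: "p \<in> X" and q: "q \<in> X"
    define T where "T = Np p \<union> Np q"
    have fT: "finite T" using cnt2[OF p] cnt2[OF q] by (simp add: T_def Np_def)
    have cT: "card T \<le> 2 * K^2"
    proof -
      have "card T \<le> card (Np p) + card (Np q)" unfolding T_def by (rule card_Un_le)
      then show ?thesis using cnt2[OF p] cnt2[OF q] by (simp add: Np_def)
    qed
    have TY: "T \<subseteq> Y" by (auto simp: T_def Np_def)
    have "(\<lambda>i. w p i - w q i) = (\<lambda>i. \<Sum>y\<in>T. (\<psi> y p - \<psi> y q) * e y i)"
      using ext[OF fT _ TY, of p] ext[OF fT _ TY, of q]
      by (auto simp: T_def left_diff_distrib sum_subtractf)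
    then have "vnorm D (\<lambda>i. w p i - w q i) \<le> (\<Sum>y\<in>T. \<bar>\<psi> y p - \<psi> y q\<bar> * vnorm D (e y))"
      using vnorm_sum[OF fT, of D "\<lambda>y. \<psi> y p - \<psi> y q" e] by simp
    also have "\<dots> \<le> (\<Sum>y\<in>T. dist p q / (2*r))"
      by (rule sum_mono) (use e TY psil in auto)
    also have "\<dots> = real (card T) * (dist p q / (2*r))" by simp
    also have "\<dots> \<le> real (2 * K^2) * (dist p q / (2*r))"
      using cT rpos by (intro mult_right_mono) (simp_all only: of_nat_le_iff, simp)
    also have "\<dots> = (real K^2 / r) * dist p q" using rpos by (simp add: field_simps)
    finally show "vnorm D (\<lambda>i. w p i - w q i) \<le> (real K^2 / r) * dist p q" .
  qed
qed

lemma vnorm_zero[simp]: "vnorm D (\<lambda>i. 0) = 0"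
  by (simp add: vnorm_def vinner_def)

lemma lipnormV_nonneg: "lipschitzV D X f \<Longrightarrow> 0 \<le> lipnormV D X f"
  unfolding lipnormV_def lipschitzV_def by (rule cSup_upper) auto

lemma lip_point:
  assumes "lipschitzV D X f" "x \<in> X" "y \<in> X"
  shows "vnorm D (\<lambda>i. f x i - f y i) \<le> lipnormV D X f * dist x y"
proof (cases "x = y")
  case True
  then show ?thesis using lipnormV_nonneg[OF assms(1)] by simp
next
  case False
  then have dp: "dist x y > 0" by simp
  have "vnorm D (\<lambda>i. f x i - f y i) / dist x y \<in> lipqV D X f"
    using assms False unfolding lipqV_def by blast
  then have "vnorm D (\<lambda>i. f x i - f y i) / dist x y \<le> lipnormV D X f"
    using assms(1) unfolding lipnormV_def lipschitzV_def by (intro cSup_upper) auto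
  then show ?thesis using dp by (simp add: divide_le_eq)
qed

lemma lipnorm_le:
  assumes "\<And>x y. x \<in> X \<Longrightarrow> y \<in> X \<Longrightarrow> vnorm D (\<lambda>i. f x i - f y i) \<le> c * dist x y" "0 \<le> c"
  shows "lipschitzV D X f \<and> lipnormV D X f \<le> c"
proof -
  have le: "q \<le> c" if "q \<in> lipqV D X f" for q
  proof -
    from that obtain x y where xy: "q = vnorm D (\<lambda>i. f x i - f y i) / dist x y" "x \<in> X" "y \<in> X" "x \<noteq> y"
      unfolding lipqV_def by blast
    then have "dist x y > 0" by simp
    then show ?thesis using assms(1)[OF xy(2,3)] xy(1) by (simp add: divide_le_eq)
  qed
  then have "bdd_above (lipqV D X f)" by (rule bdd_aboveI)
  moreover have "Sup (insert 0 (lipqV D X f)) \<le> c"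
    by (rule cSup_least) (use le assms(2) in auto)
  ultimately show ?thesis by (simp add: lipschitzV_def lipnormV_def)
qed

lemma linf_le:
  assumes "\<And>x. x \<in> X \<Longrightarrow> vnorm D (f x) \<le> c" "0 \<le> c"
  shows "boundedV D X f \<and> linfV D X f \<le> c \<and> 0 \<le> linfV D X f"
proof -
  have b: "bdd_above ((\<lambda>x. vnorm D (f x)) ` X)" using assms(1) by (intro bdd_aboveI) auto
  moreover have "Sup (insert 0 ((\<lambda>x. vnorm D (f x)) ` X)) \<le> c"
    by (rule cSup_least) (use assms in auto)
  moreover have "0 \<le> Sup (insert 0 ((\<lambda>x. vnorm D (f x)) ` X))"
    by (rule cSup_upper) (use b in auto)
  ultimately show ?thesis by (simp add: boundedV_def linfV_def)
qed

lemma dim_bound: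
  assumes "2 \<le> K" "real m \<le> real D - 224 * real K ^ 4 * ln (real K)"
  shows "m + K^3 \<le> D"
proof -
  have "ln (1/2::real) \<le> 1/2 - 1" by (rule ln_le_minus_one) simp
  then have l2: "ln (2::real) \<ge> 1/2" by (simp add: ln_div)
  have "ln (2::real) \<le> ln (real K)" using assms(1) by (intro ln_mono) auto
  then have lK: "ln (real K) \<ge> 1/2" using l2 by linarith
  have K1: "real K \<ge> 1" using assms(1) by simp
  have "real K ^ 3 \<le> real K ^ 4" using K1 by (intro power_increasing) auto
  also have "\<dots> \<le> 224 * real K ^ 4 * ln (real K)"
  proof -
    have "real K ^ 4 * 1 \<le> real K ^ 4 * (224 * ln (real K))" using lK
      by (intro mult_left_mono) auto
    then show ?thesis by (simp add: algebra_simps)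
  qed
  finally have "real m + real K ^ 3 \<le> real D" using assms(2) by linarith
  then show ?thesis by (metis of_nat_add of_nat_le_iff of_nat_power)
qed

lemma vinner_diff_left: "vinner D (\<lambda>i. y i - z i) x = vinner D y x - vinner D z x"
  using vinner_diff_right[of D x y z] vinner_sym by metis

lemma vinner_add_left: "vinner D (\<lambda>i. y i + z i) x = vinner D y x + vinner D z x"
  unfolding vinner_def by (simp add: algebra_simps sum.distrib)

theorem theorem4p5:
  fixes K m :: nat
    and C1 C2 C3 C4 :: real
    and Cinv Cabs Capp :: "real \<Rightarrow> real"
  assumes "K \<ge> 2"
  shows "\<exists>C::real. \<forall>(X::'a::metric_space set) D
            (F1::('a \<Rightarrow> real) set) N1 (F::('a \<Rightarrow> nat \<Rightarrow> real) set) N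
            (v::nat \<Rightarrow> 'a \<Rightarrow> nat \<Rightarrow> real).
     doubling X K \<longrightarrow>
     F1 \<subseteq> LipR X \<longrightarrow> F \<subseteq> LipV D X \<longrightarrow>
     normed_fs_R F1 N1 \<longrightarrow> normed_fs_V F N \<longrightarrow>
     (\<forall>f\<in>F1. lipnormR X f \<le> C1 * N1 f) \<longrightarrow>
     (\<forall>u\<in>F. lipnormV D X u \<le> C2 * N u) \<longrightarrow>
     (\<forall>f\<in>F1. \<forall>u\<in>F. (\<lambda>x i. f x * u x i) \<in> F \<and>
                      N (\<lambda>x i. f x * u x i) \<le> C3 * N1 f * N u) \<longrightarrow>
     (\<forall>u\<in>F. \<forall>w\<in>F. (\<lambda>x. vinner D (u x) (w x)) \<in> F1 \<and>
                      N1 (\<lambda>x. vinner D (u x) (w x)) \<le> C4 * N u * N w) \<longrightarrow>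
     (\<forall>f\<in>F1. \<forall>c>0. (\<forall>x\<in>X. f x \<ge> c) \<longrightarrow>
                      (\<lambda>x. 1 / f x) \<in> F1 \<and> N1 (\<lambda>x. 1 / f x) \<le> Cinv c * N1 f) \<longrightarrow>
     (\<forall>u\<in>F. \<forall>c>0. (\<forall>x\<in>X. vnorm D (u x) \<ge> c) \<longrightarrow>
                      (\<lambda>x. vnorm D (u x)) \<in> F1 \<and> N1 (\<lambda>x. vnorm D (u x)) \<le> Cabs c * N u) \<longrightarrow>
     (\<forall>\<delta>>0. \<forall>w. (\<forall>x\<in>X. w x \<in> RD D) \<longrightarrow> lipschitzV D X w \<longrightarrow> lipnormV D X w \<le> 1 \<longrightarrow>
        (\<exists>u\<in>F. (\<exists>\<epsilon><\<delta>. \<forall>x\<in>X. vnorm D (\<lambda>i. u x i - w x i) \<le> \<epsilon>) \<and>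
                (boundedV D X w \<longrightarrow> N u \<le> Capp \<delta> * (linfV D X w + lipnormV D X w)))) \<longrightarrow>
     1 \<le> m \<longrightarrow> real m \<le> real D - 224 * real K ^ 4 * ln (real K) \<longrightarrow>
     (\<forall>i\<in>{1..m}. v i \<in> F \<and> N (v i) \<le> 1) \<longrightarrow>
     (\<forall>p\<in>X. \<forall>i\<in>{1..m}. \<forall>j\<in>{1..m}. vinner D (v i p) (v j p) = (if i = j then 1 else 0)) \<longrightarrow>
     (\<exists>u\<in>F. N u \<le> C \<and>
        (\<forall>p\<in>X. vnorm D (u p) = 1 \<and> (\<forall>i\<in>{1..m}. vinner D (v i p) (u p) = 0)))"
proof -
  note K2 = assms
  define L0 where "L0 = max C2 0"
  define r where "r = 1 / (16 * real m * real K^2 * (L0 + 1))"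
  define Lw where "Lw = real K^2 / r"
  define \<Lambda> where "\<Lambda> = \<bar>Lw\<bar> + 1"
  define \<delta> where "\<delta> = 1 / (8 * (1 + real m) * \<Lambda>)"
  define B1 where "B1 = \<Lambda> * (\<bar>Capp \<delta>\<bar> * (real K^2 + 1))"
  define B2 where "B2 = B1 + real m * (\<bar>C3\<bar> * (\<bar>C4\<bar> * B1))"
  define C where "C = \<bar>C3\<bar> * (\<bar>Cinv (1/4)\<bar> * (\<bar>Cabs (1/4)\<bar> * B2)) * B2"
  have L0: "0 \<le> L0" by (simp add: L0_def)
  have Lam: "\<Lambda> \<ge> 1" by (simp add: \<Lambda>_def)
  have dpos: "\<delta> > 0" using Lam by (simp add: \<delta>_def)
  have B1: "0 \<le> B1" using Lam by (simp add: B1_def)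
  have B2: "B1 \<le> B2" "0 \<le> B2" using B1 by (simp_all add: B2_def)
  show ?thesis
  proof (rule exI[of _ C], intro allI impI)
    fix X :: "'a::metric_space set" and D and F1 :: "('a \<Rightarrow> real) set" and N1
      and F :: "('a \<Rightarrow> nat \<Rightarrow> real) set" and N and v :: "nat \<Rightarrow> 'a \<Rightarrow> nat \<Rightarrow> real"
    assume dbl: "doubling X K"
      and F1L: "F1 \<subseteq> LipR X" and FL: "F \<subseteq> LipV D X"
      and nR: "normed_fs_R F1 N1" and nV: "normed_fs_V F N"
      and H1: "\<forall>f\<in>F1. lipnormR X f \<le> C1 * N1 f"
      and H2: "\<forall>u\<in>F. lipnormV D X u \<le> C2 * N u"
      and H3: "\<forall>f\<in>F1. \<forall>u\<in>F. (\<lambda>x i. f x * u x i) \<in> F \<and>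
                      N (\<lambda>x i. f x * u x i) \<le> C3 * N1 f * N u"
      and H4: "\<forall>u\<in>F. \<forall>w\<in>F. (\<lambda>x. vinner D (u x) (w x)) \<in> F1 \<and>
                      N1 (\<lambda>x. vinner D (u x) (w x)) \<le> C4 * N u * N w"
      and Hinv: "\<forall>f\<in>F1. \<forall>c>0. (\<forall>x\<in>X. f x \<ge> c) \<longrightarrow>
                      (\<lambda>x. 1 / f x) \<in> F1 \<and> N1 (\<lambda>x. 1 / f x) \<le> Cinv c * N1 f"
      and Habs: "\<forall>u\<in>F. \<forall>c>0. (\<forall>x\<in>X. vnorm D (u x) \<ge> c) \<longrightarrow>
                      (\<lambda>x. vnorm D (u x)) \<in> F1 \<and> N1 (\<lambda>x. vnorm D (u x)) \<le> Cabs c * N u"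
      and Happ: "\<forall>\<delta>>0. \<forall>w. (\<forall>x\<in>X. w x \<in> RD D) \<longrightarrow> lipschitzV D X w \<longrightarrow> lipnormV D X w \<le> 1 \<longrightarrow>
        (\<exists>u\<in>F. (\<exists>\<epsilon><\<delta>. \<forall>x\<in>X. vnorm D (\<lambda>i. u x i - w x i) \<le> \<epsilon>) \<and>
                (boundedV D X w \<longrightarrow> N u \<le> Capp \<delta> * (linfV D X w + lipnormV D X w)))"
      and m1: "1 \<le> m" and mD: "real m \<le> real D - 224 * real K ^ 4 * ln (real K)"
      and vF: "\<forall>i\<in>{1..m}. v i \<in> F \<and> N (v i) \<le> 1"
      and vON: "\<forall>p\<in>X. \<forall>i\<in>{1..m}. \<forall>j\<in>{1..m}. vinner D (v i p) (v j p) = (if i = j then 1 else 0)"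
    show "\<exists>u\<in>F. N u \<le> C \<and>
        (\<forall>p\<in>X. vnorm D (u p) = 1 \<and> (\<forall>i\<in>{1..m}. vinner D (v i p) (u p) = 0))"
    proof -
      have Vz: "(\<lambda>x i. 0) \<in> F" and Vadd: "\<And>f g. f \<in> F \<Longrightarrow> g \<in> F \<Longrightarrow> (\<lambda>x i. f x i + g x i) \<in> F"
        and Vsc: "\<And>a f. f \<in> F \<Longrightarrow> (\<lambda>x i. a * f x i) \<in> F"
        and Vnn: "\<And>f. f \<in> F \<Longrightarrow> 0 \<le> N f"
        and Vz0: "N (\<lambda>x i. 0) = 0"
        and Vnsc: "\<And>a f. f \<in> F \<Longrightarrow> N (\<lambda>x i. a * f x i) = \<bar>a\<bar> * N f"
        and Vtri: "\<And>f g. f \<in> F \<Longrightarrow> g \<in> F \<Longrightarrow> N (\<lambda>x i. f x i + g x i) \<le> N f + N g"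
        using nV unfolding normed_fs_V_def normed_lin_space_def by blast+
      have R1nn: "\<And>f. f \<in> F1 \<Longrightarrow> 0 \<le> N1 f"
        using nR unfolding normed_fs_R_def normed_lin_space_def by blast
      have vk: "v k \<in> F" "0 \<le> N (v k)" "N (v k) \<le> 1" if "k \<in> {1..m}" for k
        using vF that Vnn by auto
      have vunit: "vnorm D (v k p) = 1" if "k \<in> {1..m}" "p \<in> X" for k p
        using vON that by (simp add: vnorm_def)
      have vlip: "vnorm D (\<lambda>i. v k x i - v k y i) \<le> L0 * dist x y"
        if k: "k \<in> {1..m}" and x: "x \<in> X" and y: "y \<in> X" for k x y
      proof -
        have "lipschitzV D X (v k)" using FL vk(1)[OF k] by (auto simp: LipV_def)
        from lip_point[OF this x y] have "vnorm D (\<lambda>i. v k x i - v k y i) \<le> lipnormV D X (v k) * dist x y" .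
        also have "lipnormV D X (v k) \<le> L0"
        proof -
          have "lipnormV D X (v k) \<le> C2 * N (v k)" using H2 vk(1)[OF k] by blast
          also have "\<dots> \<le> L0" using vk(2,3)[OF k] unfolding L0_def
            by (cases "C2 \<ge> 0") (auto intro: mult_left_le order_trans[OF mult_nonpos_nonneg])
          finally show ?thesis .
        qed
        then have "lipnormV D X (v k) * dist x y \<le> L0 * dist x y" by (intro mult_right_mono) auto
        finally show ?thesis .
      qed
      have dim: "m + K^3 \<le> D" by (rule dim_bound[OF K2 mD])
      obtain w where w: "\<forall>p\<in>X. w p \<in> RD D" "\<forall>p\<in>X. vnorm D (w p) \<le> real K^2" "\<forall>p\<in>X. 1/2 \<le> vnorm D (w p)"
        "\<forall>p\<in>X. \<forall>k\<in>{1..m}. \<bar>vinner D (w p) (v k p)\<bar> \<le> 1/(8*real m)"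
        "\<forall>p\<in>X. \<forall>q\<in>X. vnorm D (\<lambda>i. w p i - w q i) \<le> (real K^2 / r) * dist p q"
        using construct_w[where v=v, OF dbl K2 m1 dim L0 vlip r_def] by blast
      define W where "W = (\<lambda>x i. w x i / \<Lambda>)"
      have Wsc: "W x = (\<lambda>i. (1/\<Lambda>) * w x i)" for x by (simp add: W_def)
      have WRD: "\<forall>x\<in>X. W x \<in> RD D" using w(1) by (auto simp: W_def RD_def)
      have Wl: "vnorm D (\<lambda>i. W x i - W y i) \<le> 1 * dist x y" if "x \<in> X" "y \<in> X" for x y
      proof -
        have e1: "(\<lambda>i. W x i - W y i) = (\<lambda>i. (1/\<Lambda>) * (w x i - w y i))" by (simp add: W_def diff_divide_distrib)
        have "vnorm D (\<lambda>i. W x i - W y i) = \<bar>1/\<Lambda>\<bar> * vnorm D (\<lambda>i. w x i - w y i)"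
          unfolding e1 by (rule vnorm_scale)
        then have "vnorm D (\<lambda>i. W x i - W y i) = (1/\<Lambda>) * vnorm D (\<lambda>i. w x i - w y i)"
          using Lam by simp
        also have "\<dots> \<le> (1/\<Lambda>) * (Lw * dist x y)"
          using w(5) that Lam by (intro mult_left_mono) (auto simp: Lw_def)
        also have "\<dots> \<le> 1 * dist x y"
        proof -
          have "Lw / \<Lambda> \<le> 1" using Lam abs_ge_self[of Lw] by (simp add: \<Lambda>_def divide_le_eq)
          then have "(Lw / \<Lambda>) * dist x y \<le> 1 * dist x y" by (intro mult_right_mono) auto
          then show ?thesis by simp
        qed
        finally show ?thesis .
      qed
      have WL: "lipschitzV D X W \<and> lipnormV D X W \<le> 1" by (rule lipnorm_le) (use Wl in auto)
      have WB: "boundedV D X W \<and> linfV D X W \<le> real K^2 \<and> 0 \<le> linfV D X W"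
      proof (rule linf_le)
        fix x assume "x \<in> X"
        have "vnorm D (W x) = \<bar>1/\<Lambda>\<bar> * vnorm D (w x)" unfolding Wsc by (rule vnorm_scale)
        then have "vnorm D (W x) = (1/\<Lambda>) * vnorm D (w x)" using Lam by simp
        also have "\<dots> \<le> 1 * vnorm D (w x)" using Lam by (intro mult_right_mono) auto
        also have "\<dots> \<le> real K^2" using w(2) \<open>x \<in> X\<close> by simp
        finally show "vnorm D (W x) \<le> real K^2" .
      qed simp
      have Wl0: "0 \<le> lipnormV D X W" using WL lipnormV_nonneg by blast
      obtain u0 \<epsilon> where u0: "u0 \<in> F" "\<epsilon> < \<delta>" "\<forall>x\<in>X. vnorm D (\<lambda>i. u0 x i - W x i) \<le> \<epsilon>"
        "N u0 \<le> Capp \<delta> * (linfV D X W + lipnormV D X W)"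
        using Happ dpos WRD WL WB by blast
      have Nu0: "N u0 \<le> \<bar>Capp \<delta>\<bar> * (real K^2 + 1)"
      proof -
        have "Capp \<delta> * (linfV D X W + lipnormV D X W) \<le> \<bar>Capp \<delta>\<bar> * (linfV D X W + lipnormV D X W)"
          using WB Wl0 by (intro mult_right_mono) auto
        also have "\<dots> \<le> \<bar>Capp \<delta>\<bar> * (real K^2 + 1)" using WB WL by (intro mult_left_mono) auto
        finally show ?thesis using u0(4) by linarith
      qed
      define u1 where "u1 = (\<lambda>x i. \<Lambda> * u0 x i)"
      have u1F: "u1 \<in> F" unfolding u1_def by (rule Vsc[OF u0(1)])
      have Nu1: "N u1 \<le> B1"
      proof -
        have "N u1 = \<Lambda> * N u0" using Lam Vnsc[OF u0(1)] by (simp add: u1_def)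
        also have "\<dots> \<le> \<Lambda> * (\<bar>Capp \<delta>\<bar> * (real K^2 + 1))" using Nu0 Lam by (intro mult_left_mono) auto
        finally show ?thesis by (simp add: B1_def)
      qed
      have Nu1nn: "0 \<le> N u1" by (rule Vnn[OF u1F])
      define \<eta> where "\<eta> = 1 / (8 * (1 + real m))"
      have close: "vnorm D (\<lambda>i. u1 p i - w p i) \<le> \<eta>" if p: "p \<in> X" for p
      proof -
        have e1: "(\<lambda>i. u1 p i - w p i) = (\<lambda>i. \<Lambda> * (u0 p i - W p i))"
          using Lam by (auto simp: u1_def W_def algebra_simps)
        have "vnorm D (\<lambda>i. u1 p i - w p i) = \<bar>\<Lambda>\<bar> * vnorm D (\<lambda>i. u0 p i - W p i)"
          unfolding e1 by (rule vnorm_scale)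
        then have "vnorm D (\<lambda>i. u1 p i - w p i) = \<Lambda> * vnorm D (\<lambda>i. u0 p i - W p i)"
          using Lam by simp
        also have "\<dots> \<le> \<Lambda> * \<delta>" using u0(2,3) p Lam by (intro mult_left_mono) auto
        also have "\<dots> = \<eta>" using Lam by (simp add: \<delta>_def \<eta>_def)
        finally show ?thesis .
      qed
      define f where "f k = (\<lambda>x. vinner D (u1 x) (v k x))" for k
      have fF1: "f k \<in> F1" and Nf: "N1 (f k) \<le> \<bar>C4\<bar> * B1" if k: "k \<in> {1..m}" for k
      proof -
        have h: "f k \<in> F1 \<and> N1 (f k) \<le> C4 * N u1 * N (v k)"
          using H4 u1F vk(1)[OF k] unfolding f_def by blast
        then show "f k \<in> F1" by simp
        have "C4 * N u1 * N (v k) \<le> \<bar>C4\<bar> * N u1 * N (v k)"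
          using Nu1nn vk(2)[OF k] by (intro mult_right_mono) auto
        also have "\<dots> \<le> \<bar>C4\<bar> * B1 * 1"
          using Nu1 Nu1nn vk(2,3)[OF k] by (intro mult_mono) (auto intro: mult_left_mono)
        finally show "N1 (f k) \<le> \<bar>C4\<bar> * B1" using h by simp
      qed
      define g where "g k = (\<lambda>x i. f k x * v k x i)" for k
      have gF: "g k \<in> F" and Ng: "N (g k) \<le> \<bar>C3\<bar> * (\<bar>C4\<bar> * B1)" if k: "k \<in> {1..m}" for k
      proof -
        have h: "g k \<in> F \<and> N (g k) \<le> C3 * N1 (f k) * N (v k)"
          using H3 fF1[OF k] vk(1)[OF k] unfolding g_def by blast
        then show "g k \<in> F" by simp
        have nf: "0 \<le> N1 (f k)" by (rule R1nn[OF fF1[OF k]])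
        have "C3 * N1 (f k) * N (v k) \<le> \<bar>C3\<bar> * N1 (f k) * N (v k)"
          using nf vk(2)[OF k] by (intro mult_right_mono) (auto intro: mult_right_mono)
        also have "\<dots> \<le> \<bar>C3\<bar> * (\<bar>C4\<bar> * B1) * 1"
          using Nf[OF k] nf vk(2,3)[OF k] by (intro mult_mono) (auto intro: mult_left_mono)
        finally show "N (g k) \<le> \<bar>C3\<bar> * (\<bar>C4\<bar> * B1)" using h by simp
      qed
      define S where "S n = (\<lambda>x i. \<Sum>k\<in>{1..n}. f k x * v k x i)" for n
      have SF: "S n \<in> F \<and> N (S n) \<le> real n * (\<bar>C3\<bar> * (\<bar>C4\<bar> * B1))" if "n \<le> m" for n
        using that
      proof (induction n)
        case 0
        have "S 0 = (\<lambda>x i. 0)" by (simp add: S_def)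
        then show ?case using Vz Vz0 by simp
      next
        case (Suc n)
        have k: "Suc n \<in> {1..m}" using Suc.prems by simp
        have IH: "S n \<in> F" "N (S n) \<le> real n * (\<bar>C3\<bar> * (\<bar>C4\<bar> * B1))" using Suc by auto
        have eq: "S (Suc n) = (\<lambda>x i. S n x i + g (Suc n) x i)"
          by (simp add: S_def g_def)
        have "S (Suc n) \<in> F" unfolding eq by (rule Vadd[OF IH(1) gF[OF k]])
        moreover have "N (S (Suc n)) \<le> N (S n) + N (g (Suc n))" unfolding eq by (rule Vtri[OF IH(1) gF[OF k]])
        ultimately show ?case using IH(2) Ng[OF k] by (simp add: algebra_simps)
      qed
      define u2 where "u2 = (\<lambda>x i. u1 x i - S m x i)"
      have u2eq: "u2 = (\<lambda>x i. u1 x i + (\<lambda>x i. (-1) * S m x i) x i)" by (simp add: u2_def)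
      have SmF: "S m \<in> F" and NSm: "N (S m) \<le> real m * (\<bar>C3\<bar> * (\<bar>C4\<bar> * B1))" using SF[of m] by auto
      have u2F: "u2 \<in> F" unfolding u2eq by (rule Vadd[OF u1F Vsc[OF SmF]])
      have Nu2: "N u2 \<le> B2"
      proof -
        have "N u2 \<le> N u1 + N (\<lambda>x i. (-1) * S m x i)" unfolding u2eq by (rule Vtri[OF u1F Vsc[OF SmF]])
        also have "N (\<lambda>x i. (-1) * S m x i) = N (S m)" using Vnsc[OF SmF, of "-1"] by simp
        finally show ?thesis using Nu1 NSm by (simp add: B2_def)
      qed
      have Nu2nn: "0 \<le> N u2" by (rule Vnn[OF u2F])
      have orth2: "vinner D (v j p) (u2 p) = 0" if j: "j \<in> {1..m}" and p: "p \<in> X" for j p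
      proof -
        have "vinner D (v j p) (u2 p) = vinner D (v j p) (u1 p) - vinner D (v j p) (S m p)"
          unfolding u2_def by (rule vinner_diff_right)
        also have "vinner D (v j p) (S m p) = (\<Sum>k\<in>{1..m}. f k p * vinner D (v j p) (v k p))"
          unfolding S_def by (rule vinner_sum_right)
        also have "\<dots> = (\<Sum>k\<in>{1..m}. if j = k then f k p else 0)"
          using vON p j by (intro sum.cong) auto
        also have "\<dots> = f j p" using j by simp
        finally show ?thesis by (simp add: f_def vinner_sym)
      qed
      have low: "1/4 \<le> vnorm D (u2 p)" if p: "p \<in> X" for p
      proof -
        have fk: "\<bar>f k p\<bar> \<le> 1/(8*real m) + \<eta>" if k: "k \<in> {1..m}" for k
        proof -
          have "f k p = vinner D (w p) (v k p) + vinner D (\<lambda>i. u1 p i - w p i) (v k p)"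
            by (simp add: f_def vinner_diff_left)
          moreover have "\<bar>vinner D (\<lambda>i. u1 p i - w p i) (v k p)\<bar> \<le> \<eta>"
            using vinner_CS[of D "\<lambda>i. u1 p i - w p i" "v k p"] close[OF p] vunit[OF k p] by simp
          ultimately show ?thesis using w(4) p k by (smt (verit))
        qed
        have "vnorm D (S m p) \<le> (\<Sum>k\<in>{1..m}. \<bar>f k p\<bar> * vnorm D (v k p))"
          unfolding S_def by (rule vnorm_sum) simp
        also have "\<dots> \<le> (\<Sum>k\<in>{1..m}. 1/(8*real m) + \<eta>)"
          by (rule sum_mono) (use fk vunit p in auto)
        also have "\<dots> = 1/8 + real m * \<eta>" using m1 by (simp add: algebra_simps)
        finally have Sb: "vnorm D (S m p) \<le> 1/8 + real m * \<eta>" .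
        have "vnorm D (w p) - vnorm D (\<lambda>i. w p i - u1 p i) \<le> vnorm D (u1 p)"
          using vnorm_diff_ge[of D "w p" "\<lambda>i. w p i - u1 p i"] by simp
        moreover have "vnorm D (\<lambda>i. w p i - u1 p i) = vnorm D (\<lambda>i. u1 p i - w p i)"
          using vnorm_scale[of D "-1" "\<lambda>i. u1 p i - w p i"] by simp
        ultimately have u1b: "1/2 - \<eta> \<le> vnorm D (u1 p)" using close[OF p] w(3) p by force
        have "vnorm D (u1 p) - vnorm D (S m p) \<le> vnorm D (u2 p)"
          unfolding u2_def by (rule vnorm_diff_ge)
        moreover have "(1 + real m) * \<eta> = 1/8" by (simp add: \<eta>_def)
        ultimately show ?thesis using u1b Sb by (simp add: algebra_simps)
      qed
      define h where "h = (\<lambda>x. vnorm D (u2 x))"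
      have c4: "(1/4::real) > 0" by simp
      have hh: "h \<in> F1 \<and> N1 h \<le> Cabs (1/4) * N u2"
        using Habs u2F c4 low unfolding h_def by blast
      have hF1: "h \<in> F1" using hh by simp
      have hlow: "\<forall>x\<in>X. h x \<ge> 1/4" using low by (simp add: h_def)
      define hi where "hi = (\<lambda>x. 1 / h x)"
      have hih: "hi \<in> F1 \<and> N1 hi \<le> Cinv (1/4) * N1 h"
        using Hinv hF1 c4 hlow unfolding hi_def by blast
      have hiF1: "hi \<in> F1" using hih by simp
      have Nh: "N1 h \<le> \<bar>Cabs (1/4)\<bar> * B2"
      proof -
        have "Cabs (1/4) * N u2 \<le> \<bar>Cabs (1/4)\<bar> * N u2" using Nu2nn by (intro mult_right_mono) auto
        also have "\<dots> \<le> \<bar>Cabs (1/4)\<bar> * B2" using Nu2 by (intro mult_left_mono) auto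
        finally show ?thesis using hh by simp
      qed
      have Nhnn: "0 \<le> N1 h" by (rule R1nn[OF hF1])
      have Nhinn: "0 \<le> N1 hi" by (rule R1nn[OF hiF1])
      have Nhi: "N1 hi \<le> \<bar>Cinv (1/4)\<bar> * (\<bar>Cabs (1/4)\<bar> * B2)"
      proof -
        have "Cinv (1/4) * N1 h \<le> \<bar>Cinv (1/4)\<bar> * N1 h" using Nhnn by (intro mult_right_mono) auto
        also have "\<dots> \<le> \<bar>Cinv (1/4)\<bar> * (\<bar>Cabs (1/4)\<bar> * B2)" using Nh by (intro mult_left_mono) auto
        finally show ?thesis using hih by simp
      qed
      define u where "u = (\<lambda>x i. hi x * u2 x i)"
      have uh: "u \<in> F \<and> N u \<le> C3 * N1 hi * N u2" using H3 hiF1 u2F unfolding u_def by blast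
      show ?thesis
      proof (rule bexI[of _ u], intro conjI ballI)
        show "u \<in> F" using uh by simp
        have "C3 * N1 hi * N u2 \<le> \<bar>C3\<bar> * N1 hi * N u2"
          using Nhinn Nu2nn by (intro mult_right_mono) auto
        also have "\<dots> \<le> \<bar>C3\<bar> * (\<bar>Cinv (1/4)\<bar> * (\<bar>Cabs (1/4)\<bar> * B2)) * B2"
          using Nhi Nu2 Nhinn Nu2nn by (intro mult_mono) (auto intro: mult_left_mono)
        finally show "N u \<le> C" using uh by (simp add: C_def)
      next
        fix p assume p: "p \<in> X"
        have hp: "h p \<ge> 1/4" using hlow p by blast
        have "vnorm D (u p) = \<bar>hi p\<bar> * vnorm D (u2 p)" unfolding u_def by (rule vnorm_scale)
        then show "vnorm D (u p) = 1" using hp by (simp add: hi_def h_def)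
      next
        fix p i assume p: "p \<in> X" and i: "i \<in> {1..m}"
        show "vinner D (v i p) (u p) = 0"
          using orth2[OF i p] by (simp add: u_def vinner_scale_right)
      qed
    qed
  qed
qed

end
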